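(* Let $n\ge 2$, $\alpha\in[0,\pi/2)$, $A\in\Pi_{s,\alpha}^n$ and $q\in\mathbb{C}$ with $0<|q|\le 1$. Then (a) $\cos(\alpha)\,w_q(A)\le\|\mathcal{R}(A)\|$; (b) $|q|\cos(\alpha)\,w_q(A)\le w_q(\mathcal{R}(A))$.
   Context: For $\alpha\in[0,\pi/2)$, $S_\alpha=\{z\in\mathbb{C}:\operatorname{Re}z>0,\ |\operatorname{Im}z|\le\tan(\alpha)\operatorname{Re}z\}$, and $\Pi_{s,\alpha}^n$ is the set of $n\times n$ complex matrices $A$ whose numerical range $W(A)=\{\langle Ax,x\rangle:\|x\|=1\}$ is contained in $S_\alpha$ (sectorial matrices). $\mathcal{R}(A)=\frac{A+A^*}{2}$. $\|\cdot\|$ is the operator (spectral) norm. For $|q|\le1$, the $q$-numerical radius is $w_q(A)=\sup\{|\langle Ax,y\rangle|:\|x\|=\|y\|=1,\ \langle x,y\rangle=q\}$. *)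

theory Defs
  imports "HOL-Analysis.Analysis"
begin

definition cinner :: "complex ^ 'n::finite \<Rightarrow> complex ^ 'n \<Rightarrow> complex" where
  "cinner x y = (\<Sum>i\<in>UNIV. x $ i * cnj (y $ i))"

definition adjoint_mat :: "complex ^ 'n::finite ^ 'n \<Rightarrow> complex ^ 'n ^ 'n" where
  "adjoint_mat A = (\<chi> i j. cnj (A $ j $ i))"

definition herm_part :: "complex ^ 'n::finite ^ 'n \<Rightarrow> complex ^ 'n ^ 'n" where
  "herm_part A = (\<chi> i j. (A $ i $ j + adjoint_mat A $ i $ j) / 2)"

definition numerical_range :: "complex ^ 'n::finite ^ 'n \<Rightarrow> complex set" where
  "numerical_range A = {cinner (A *v x) x | x. norm x = 1}"

definition sector :: "real \<Rightarrow> complex set" where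
  "sector \<alpha> = {z. Re z > 0 \<and> \<bar>Im z\<bar> \<le> tan \<alpha> * Re z}"

definition sectorial :: "real \<Rightarrow> complex ^ 'n::finite ^ 'n \<Rightarrow> bool" where
  "sectorial \<alpha> A \<longleftrightarrow> numerical_range A \<subseteq> sector \<alpha>"

definition op_norm :: "complex ^ 'n::finite ^ 'n \<Rightarrow> real" where
  "op_norm A = onorm (\<lambda>x. A *v x)"

definition q_numrad :: "complex \<Rightarrow> complex ^ 'n::finite ^ 'n \<Rightarrow> real" where
  "q_numrad q A = Sup {cmod (cinner (A *v x) y) | x y. norm x = 1 \<and> norm y = 1 \<and> cinner x y = q}"

end

theory Submission imports Defs begin

lemma cinner_add_left: "cinner (x + y) z = cinner x z + cinner y z"
  by (simp add: cinner_def sum.distrib distrib_right)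
lemma cinner_add_right: "cinner x (y + z) = cinner x y + cinner x z"
  by (simp add: cinner_def sum.distrib distrib_left)
lemma cinner_smult_left: "cinner (c *s x) z = c * cinner x z"
  by (simp add: cinner_def sum_distrib_left mult.assoc)
lemma cinner_smult_right: "cinner x (c *s z) = cnj c * cinner x z"
  by (simp add: cinner_def sum_distrib_left mult_ac)
lemma cinner_commute: "cinner y x = cnj (cinner x y)"
  by (simp add: cinner_def mult.commute)
lemma cinner_self: "cinner x x = complex_of_real ((norm x)^2)"
proof -
  have "cinner x x = (\<Sum>i\<in>UNIV. complex_of_real ((cmod (x$i))^2))"
    unfolding cinner_def by (rule sum.cong) (auto simp: complex_mult_cnj cmod_power2)
  also have "\<dots> = complex_of_real (\<Sum>i\<in>UNIV. (cmod (x$i))^2)"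
    by simp
  also have "(\<Sum>i\<in>UNIV. (cmod (x$i))^2) = (norm x)^2"
    by (simp add: norm_vec_def L2_set_def sum_nonneg)
  finally show ?thesis .
qed
lemma mv_add: "(M::complex^'n::finite^'n) *v (x + y) = M *v x + M *v y"
  by (simp add: matrix_vector_right_distrib)
lemma mv_smult: "(M::complex^'n::finite^'n) *v (c *s x) = c *s (M *v x)"
  by (simp add: vec_eq_iff matrix_vector_mult_def sum_distrib_left mult_ac)
lemma scaleR_smult: "(r::real) *\<^sub>R (x::complex^'n) = (of_real r :: complex) *s x"
  unfolding vec_eq_iff vector_scaleR_component vector_smult_component
  by (simp add: scaleR_conv_of_real)


lemma cs_alg:
  fixes a d :: real and b :: complex
  assumes H: "\<And>c::complex. 0 \<le> a + 2 * Re (cnj c * b) + (cmod c)^2 * d"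
    and d: "0 \<le> d"
  shows "(cmod b)^2 \<le> a * d"
proof -
  have key: "0 \<le> a - 2 * t * (cmod b)^2 + t^2 * (cmod b)^2 * d" for t :: real
  proof -
    have "Re (cnj (- (of_real t * b)) * b) = - (t * (cmod b)^2)"
      by (simp add: cmod_power2 algebra_simps) (simp add: power2_eq_square)
    moreover have "(cmod (- (of_real t * b)))^2 = t^2 * (cmod b)^2"
      by (simp add: norm_mult power_mult_distrib)
    ultimately show ?thesis using H[of "- (of_real t * b)"] by (simp only:)
  qed
  show ?thesis
  proof (cases "d > 0")
    case True
    have "0 \<le> a - 2 * (1/d) * (cmod b)^2 + (1/d)^2 * (cmod b)^2 * d" by (rule key)
    also have "\<dots> = a - (cmod b)^2 / d" using True by (simp add: field_simps power2_eq_square)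
    finally show ?thesis using True by (simp add: field_simps)
  next
    case False
    with d have d0: "d = 0" by simp
    show ?thesis
    proof (rule ccontr)
      assume "\<not> ?thesis"
      with d0 have b0: "(cmod b)^2 > 0" by simp
      have a0: "0 \<le> a" using H[of 0] by simp
      have "0 \<le> a - 2 * ((a+1)/(2*(cmod b)^2)) * (cmod b)^2" using key[of "(a+1)/(2*(cmod b)^2)"] d0 by simp
      also have "\<dots> = -1" using b0 by (simp add: field_simps)
      finally show False by simp
    qed
  qed
qed

lemma form_cs:
  fixes B :: "'v::ab_group_add \<Rightarrow> 'v \<Rightarrow> complex" and sm :: "complex \<Rightarrow> 'v \<Rightarrow> 'v"
  assumes E: "\<And>x y c. B (x + sm c y) (x + sm c y) = B x x + cnj c * B x y + c * B y x + c * cnj c * B y y"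
    and P: "\<And>u. 0 \<le> Re (a * B u u)"
  shows "(cmod (a * B x y + cnj a * cnj (B y x)))^2
     \<le> Re (a * B x x + cnj a * cnj (B x x)) * Re (a * B y y + cnj a * cnj (B y y))"
proof -
  define G where "G = (\<lambda>x y. a * B x y + cnj a * cnj (B y x))"
  have GE: "G (x + sm c y) (x + sm c y) = G x x + cnj c * G x y + c * cnj (G x y) + c * cnj c * G y y" for c
    unfolding G_def E by (simp add: algebra_simps)
  have Greal: "G u u = of_real (2 * Re (a * B u u))" for u
    unfolding G_def by (simp add: complex_eq_iff)
  have "(cmod (G x y))^2 \<le> Re (G x x) * Re (G y y)"
  proof (rule cs_alg)
    fix c :: complex
    have "0 \<le> Re (G (x + sm c y) (x + sm c y))" using Greal P by (simp add: complex_eq_iff)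
    also have "Re (G (x + sm c y) (x + sm c y)) = Re (G x x) + 2 * Re (cnj c * G x y) + (cmod c)^2 * Re (G y y)"
      unfolding GE using Greal[of y]
      by (simp add: complex_mult_cnj cmod_power2 algebra_simps)
    finally show "0 \<le> Re (G x x) + 2 * Re (cnj c * G x y) + (cmod c)^2 * Re (G y y)" .
  next
    show "0 \<le> Re (G y y)" using Greal P by simp
  qed
  then show ?thesis unfolding G_def .
qed


lemma sqrt_sum_le:
  fixes a b c d :: real
  assumes "0 \<le> a" "0 \<le> b" "0 \<le> c" "0 \<le> d"
  shows "sqrt (a*b) + sqrt (c*d) \<le> sqrt ((a+c)*(b+d))"
proof (rule real_le_rsqrt)
  have e: "sqrt (a*b) * sqrt (c*d) = sqrt (a*d) * sqrt (b*c)"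
    by (simp add: real_sqrt_mult[symmetric] mult_ac)
  have "0 \<le> (sqrt (a*d) - sqrt (b*c))^2" by simp
  hence "2 * (sqrt (a*d) * sqrt (b*c)) \<le> a*d + b*c"
    using assms by (simp add: power2_diff mult_nonneg_nonneg)
  thus "(sqrt (a*b) + sqrt (c*d))^2 \<le> (a+c)*(b+d)"
    using assms e by (simp add: power2_sum mult_nonneg_nonneg algebra_simps)
qed

lemma cs_sqrt:
  fixes z :: complex and a b :: real
  assumes "(cmod z)^2 \<le> a * b"
  shows "cmod z \<le> sqrt (a * b)"
  using assms real_le_rsqrt by blast

lemma sect_bound:
  fixes B :: "'v::ab_group_add \<Rightarrow> 'v \<Rightarrow> complex" and sm :: "complex \<Rightarrow> 'v \<Rightarrow> 'v"
  assumes E: "\<And>x y c. B (x + sm c y) (x + sm c y) = B x x + cnj c * B x y + c * B y x + c * cnj c * B y y"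
    and R: "\<And>u. 0 \<le> Re (B u u)"
    and I: "\<And>u. \<bar>Im (B u u)\<bar> \<le> t * Re (B u u)"
    and t: "0 \<le> t"
  shows "cmod (B x y) \<le> sqrt (1 + t^2) * sqrt (Re (B x x) * Re (B y y))"
proof -
  define G where "G = (\<lambda>a x y. a * B x y + cnj a * cnj (B y x))"
  have Gd: "Re (G a u u) = 2 * Re (a * B u u)" for a u
    unfolding G_def by simp
  have CS: "(cmod (G a x y))^2 \<le> Re (G a x x) * Re (G a y y)"
    if "\<And>u. 0 \<le> Re (a * B u u)" for a
    unfolding G_def by (rule form_cs[where sm=sm, OF E that])
  have h: "(cmod (G (1/2) x y))^2 \<le> Re (B x x) * Re (B y y)"
    using CS[of "1/2"] R by (simp add: Gd)
  show ?thesis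
  proof (cases "t = 0")
    case True
    have I0: "Im (B u u) = 0" for u using I[of u] True by simp
    have "(cmod (G (-\<i>/2) x y))^2 \<le> Re (G (-\<i>/2) x x) * Re (G (-\<i>/2) y y)"
      by (rule CS) (simp add: I0)
    also have "\<dots> = 0" by (simp add: Gd I0)
    finally have k0: "G (-\<i>/2) x y = 0" by simp
    have "B x y = G (1/2) x y + \<i> * G (-\<i>/2) x y"
      unfolding G_def by (simp add: algebra_simps)
    with k0 have "B x y = G (1/2) x y" by simp
    with h True show ?thesis by (simp add: cs_sqrt)
  next
    case False
    with t have tp: "t > 0" by simp
    define p where "p = G ((t - \<i>)/2)"
    define m where "m = G ((t + \<i>)/2)"
    have pd: "Re (p u u) = t * Re (B u u) + Im (B u u)" for u
      unfolding p_def Gd by (simp add: field_simps)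
    have md: "Re (m u u) = t * Re (B u u) - Im (B u u)" for u
      unfolding m_def Gd by (simp add: field_simps)
    have pnn: "0 \<le> Re (p u u)" for u using I[of u] pd by simp
    have mnn: "0 \<le> Re (m u u)" for u using I[of u] md by simp
    have pcs: "cmod (p x y) \<le> sqrt (Re (p x x) * Re (p y y))"
      unfolding p_def
    proof (rule cs_sqrt, rule CS)
      fix u show "0 \<le> Re ((t - \<i>)/2 * B u u)" using pnn[of u] unfolding p_def Gd by simp
    qed
    have mcs: "cmod (m x y) \<le> sqrt (Re (m x x) * Re (m y y))"
      unfolding m_def
    proof (rule cs_sqrt, rule CS)
      fix u show "0 \<le> Re ((t + \<i>)/2 * B u u)" using mnn[of u] unfolding m_def Gd by simp
    qed
    have dec: "2 * t * B x y = (1 + \<i> * t) * p x y + (1 - \<i> * t) * m x y"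
      unfolding p_def m_def G_def by (simp add: field_simps)
    have n1: "cmod (1 + \<i> * t) = sqrt (1 + t^2)" by (simp add: cmod_def)
    have n2: "cmod (1 - \<i> * t) = sqrt (1 + t^2)" by (simp add: cmod_def)
    have "2 * t * cmod (B x y) = cmod (2 * t * B x y)" using tp by (simp add: norm_mult)
    also have "\<dots> \<le> cmod ((1 + \<i> * t) * p x y) + cmod ((1 - \<i> * t) * m x y)"
      unfolding dec by (rule norm_triangle_ineq)
    also have "\<dots> = sqrt (1 + t^2) * (cmod (p x y) + cmod (m x y))"
      by (simp only: norm_mult n1 n2 distrib_left)
    also have "\<dots> \<le> sqrt (1 + t^2) * (sqrt (Re (p x x) * Re (p y y)) + sqrt (Re (m x x) * Re (m y y)))"
      using pcs mcs by (intro mult_left_mono) auto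
    also have "\<dots> \<le> sqrt (1 + t^2) * sqrt ((Re (p x x) + Re (m x x)) * (Re (p y y) + Re (m y y)))"
      using pnn mnn by (intro mult_left_mono sqrt_sum_le) auto
    also have "(Re (p x x) + Re (m x x)) * (Re (p y y) + Re (m y y)) = (2*t)^2 * (Re (B x x) * Re (B y y))"
      by (simp add: pd md power2_eq_square algebra_simps)
    also have "sqrt \<dots> = 2 * t * sqrt (Re (B x x) * Re (B y y))"
      using tp by (simp add: real_sqrt_mult)
    finally have "2 * t * cmod (B x y) \<le> 2 * t * (sqrt (1 + t^2) * sqrt (Re (B x x) * Re (B y y)))"
      by (simp add: mult_ac)
    with tp show ?thesis by simp
  qed
qed


lemma cinner_zero_left[simp]: "cinner 0 y = 0" by (simp add: cinner_def)
lemma cinner_diff_right: "cinner x (y - z) = cinner x y - cinner x z"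
  by (simp add: cinner_def sum_subtractf right_diff_distrib)
lemma cinner_axis_right: "cinner x (axis i c) = x $ i * cnj c"
proof -
  have "cinner x (axis i c) = (\<Sum>k\<in>UNIV. if k = i then x $ k * cnj c else 0)"
    unfolding cinner_def axis_def by (rule sum.cong) auto
  thus ?thesis by simp
qed

lemma B_expand:
  fixes M :: "complex^'n::finite^'n"
  shows "cinner (M *v (x + c *s y)) (x + c *s y) = cinner (M *v x) x + cnj c * cinner (M *v x) y
     + c * cinner (M *v y) x + c * cnj c * cinner (M *v y) y"
  by (simp add: mv_add mv_smult cinner_add_left cinner_add_right cinner_smult_left cinner_smult_right algebra_simps)

lemma cinner_cs: "cmod (cinner x y) \<le> norm x * norm y"
proof -
  have "(cmod ((1/2) * cinner x y + cnj (1/2) * cnj (cinner y x)))^2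
     \<le> Re ((1/2) * cinner x x + cnj (1/2) * cnj (cinner x x)) * Re ((1/2) * cinner y y + cnj (1/2) * cnj (cinner y y))"
  proof (rule form_cs[where B = cinner and sm = "(*s)"])
    fix x y :: "complex^'a" and c
    show "cinner (x + c *s y) (x + c *s y) = cinner x x + cnj c * cinner x y + c * cinner y x + c * cnj c * cinner y y"
      by (simp add: cinner_add_left cinner_add_right cinner_smult_left cinner_smult_right algebra_simps)
  next
    fix u :: "complex^'a" show "0 \<le> Re (1 / 2 * cinner u u)" by (simp add: cinner_self)
  qed
  moreover have "(1/2) * cinner x y + cnj (1/2) * cnj (cinner y x) = cinner x y"
    by (simp add: cinner_commute[of x y] field_simps)
  ultimately have "(cmod (cinner x y))^2 \<le> (norm x * norm y)^2"
    by (simp add: cinner_self power_mult_distrib)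
  thus ?thesis by (rule power2_le_imp_le) simp
qed

lemma mv_op_norm: "norm ((M::complex^'n::finite^'n) *v x) \<le> op_norm M * norm x"
  unfolding op_norm_def by (rule onorm) simp

lemma unit_bound: "norm x = 1 \<Longrightarrow> norm y = 1 \<Longrightarrow> cmod (cinner ((M::complex^'n::finite^'n) *v x) y) \<le> op_norm M"
  using cinner_cs[of "M *v x" y] mv_op_norm[of M x] by simp

lemma adjoint_cinner:
  "cinner (adjoint_mat A *v x) y = cnj (cinner (A *v y) x)"
proof -
  have "cinner (adjoint_mat A *v x) y = (\<Sum>i\<in>UNIV. \<Sum>j\<in>UNIV. cnj (A$j$i) * x$j * cnj (y$i))"
    by (simp add: cinner_def adjoint_mat_def matrix_vector_mult_def sum_distrib_right)
  also have "\<dots> = (\<Sum>j\<in>UNIV. \<Sum>i\<in>UNIV. cnj (A$j$i) * x$j * cnj (y$i))"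
    by (rule sum.swap)
  also have "\<dots> = cnj (cinner (A *v y) x)"
    by (simp add: cinner_def matrix_vector_mult_def sum_distrib_right sum_distrib_left mult_ac)
  finally show ?thesis .
qed

lemma herm_cinner:
  "cinner (herm_part A *v x) y = (1/2) * cinner (A *v x) y + cnj (1/2) * cnj (cinner (A *v y) x)"
proof -
  have "herm_part A *v x = (1/2) *s (A *v x + adjoint_mat A *v x)"
    by (simp add: vec_eq_iff herm_part_def matrix_vector_mult_def sum.distrib[symmetric]
        sum_distrib_left algebra_simps add_divide_distrib)
  thus ?thesis by (simp add: cinner_smult_left cinner_add_left adjoint_cinner)
qed

lemma herm_diag: "Re (cinner (herm_part A *v u) u) = Re (cinner (A *v u) u)"
  by (simp add: herm_cinner)

lemma sect_all:
  fixes A :: "complex^'n::finite^'n"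
  assumes "sectorial \<alpha> A"
  shows "0 \<le> Re (cinner (A *v u) u) \<and> \<bar>Im (cinner (A *v u) u)\<bar> \<le> tan \<alpha> * Re (cinner (A *v u) u)"
proof (cases "u = 0")
  case True thus ?thesis by simp
next
  case False
  define r where "r = 1 / norm u"
  define v where "v = (of_real r :: complex) *s u"
  have "norm v = 1" unfolding v_def r_def scaleR_smult[symmetric] using False by simp
  hence "cinner (A *v v) v \<in> sector \<alpha>"
    using assms unfolding sectorial_def numerical_range_def by blast
  hence s: "0 < Re (cinner (A *v v) v)" "\<bar>Im (cinner (A *v v) v)\<bar> \<le> tan \<alpha> * Re (cinner (A *v v) v)"
    unfolding sector_def by auto
  have "cinner (A *v v) v = of_real (r^2) * cinner (A *v u) u"
    unfolding v_def by (simp add: mv_smult cinner_smult_left cinner_smult_right power2_eq_square)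
  hence e: "Re (cinner (A *v v) v) = r^2 * Re (cinner (A *v u) u)" "Im (cinner (A *v v) v) = r^2 * Im (cinner (A *v u) u)"
    by simp_all
  have rp: "r^2 > 0" unfolding r_def using False by simp
  from s e rp show ?thesis
    by (auto simp: abs_mult zero_less_mult_iff mult_le_cancel_left_pos mult.left_commute[of "r^2"])
qed


lemma key_bound:
  fixes A :: "complex^'n::finite^'n"
  assumes sec: "sectorial \<alpha> A" and a0: "0 \<le> \<alpha>" and a1: "\<alpha> < pi/2"
    and W: "\<And>u. norm u = 1 \<Longrightarrow> Re (cinner (herm_part A *v u) u) \<le> W"
    and x: "norm x = 1" and y: "norm y = 1"
  shows "cos \<alpha> * cmod (cinner (A *v x) y) \<le> W"
proof -
  have c0: "cos \<alpha> > 0" using a0 a1 by (intro cos_gt_zero_pi) auto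
  have "0 \<le> sin \<alpha>" using a0 a1 by (intro sin_ge_zero) auto
  hence t0: "0 \<le> tan \<alpha>" using c0 by (simp add: tan_def)
  define B where "B = (\<lambda>x y. cinner (A *v x) y)"
  have sb: "cmod (B x y) \<le> sqrt (1 + (tan \<alpha>)^2) * sqrt (Re (B x x) * Re (B y y))"
  proof (rule sect_bound[where sm = "(*s)"])
    show "\<And>x y c. B (x + c *s y) (x + c *s y) = B x x + cnj c * B x y + c * B y x + c * cnj c * B y y"
      unfolding B_def by (rule B_expand)
    show "\<And>u. 0 \<le> Re (B u u)" unfolding B_def using sect_all[OF sec] by blast
    show "\<And>u. \<bar>Im (B u u)\<bar> \<le> tan \<alpha> * Re (B u u)" unfolding B_def using sect_all[OF sec] by blast
  qed (rule t0)
  have "1 + (tan \<alpha>)^2 = (1 / cos \<alpha>)^2"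
    using c0 by (simp add: tan_def field_simps sin_squared_eq)
  hence sq: "sqrt (1 + (tan \<alpha>)^2) = 1 / cos \<alpha>" using c0 by simp
  have Rx: "0 \<le> Re (B x x)" "Re (B x x) \<le> W" using sect_all[OF sec] W[OF x] unfolding B_def herm_diag by auto
  have Ry: "0 \<le> Re (B y y)" "Re (B y y) \<le> W" using sect_all[OF sec] W[OF y] unfolding B_def herm_diag by auto
  have "sqrt (Re (B x x) * Re (B y y)) \<le> sqrt (W * W)"
    using Rx Ry by (intro real_sqrt_le_mono mult_mono) auto
  also have "\<dots> = W" using Rx by simp
  finally have "cmod (B x y) \<le> (1 / cos \<alpha>) * W" using sb sq
    by (metis c0 divide_pos_pos less_eq_real_def mult_left_mono order_trans zero_less_one)
  thus ?thesis using c0 unfolding B_def by (simp add: field_simps)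
qed


lemma norm_from_cinner: "cinner y y = 1 \<Longrightarrow> norm y = 1"
proof -
  assume "cinner y y = 1"
  hence "complex_of_real ((norm y)^2) = 1" by (simp only: cinner_self)
  hence "(norm y)^2 = 1" by (simp only: of_real_eq_1_iff)
  hence "norm y = 1 \<or> norm y = -1" by (simp add: power2_eq_1_iff)
  thus "norm y = 1" using norm_ge_zero[of y] by linarith
qed

lemma exists_orth:
  fixes x :: "complex^'n::finite"
  assumes "CARD('n) \<ge> 2"
  shows "\<exists>z. norm z = 1 \<and> cinner x z = 0"
proof -
  obtain i j :: 'n where ij: "i \<noteq> j"
  proof -
    fix i :: 'n
    have "\<exists>j. j \<noteq> i"
    proof (rule ccontr)
      assume "\<not> ?thesis"
      hence "UNIV = {i}" by auto
      hence "card (UNIV::'n set) = card {i}" by (simp only:)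
      thus False using assms by simp
    qed
    thus thesis using that by blast
  qed
  obtain w :: "complex^'n" where w: "w \<noteq> 0" "cinner x w = 0"
  proof (cases "x $ i = 0")
    case True
    show thesis by (rule that[of "axis i 1"]) (auto simp: cinner_axis_right True axis_eq_0_iff)
  next
    case False
    let ?w = "axis i (cnj (x$j)) - axis j (cnj (x$i))"
    have "?w $ j \<noteq> 0" using ij False by (simp add: axis_def)
    hence "?w \<noteq> 0" by auto
    moreover have "cinner x ?w = 0" by (simp add: cinner_diff_right cinner_axis_right mult.commute)
    ultimately show thesis by (rule that)
  qed
  define z where "z = (of_real (1 / norm w) :: complex) *s w"
  have "norm z = 1" unfolding z_def scaleR_smult[symmetric] using w by simp
  moreover have "cinner x z = 0" unfolding z_def by (simp add: cinner_smult_right w)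
  ultimately show ?thesis by blast
qed

lemma make_y:
  fixes x z :: "complex^'n::finite"
  assumes x: "norm x = 1" and z: "norm z = 1" and o: "cinner x z = 0" and q: "cmod q \<le> 1"
    and s: "s = sqrt (1 - (cmod q)^2) \<or> s = - sqrt (1 - (cmod q)^2)"
  defines "y \<equiv> cnj q *s x + (of_real s :: complex) *s z"
  shows "norm y = 1" "cinner x y = q"
proof -
  have o': "cinner z x = 0" using o cinner_commute[of z x] by simp
  have xx: "cinner x x = 1" "cinner z z = 1" using x z by (simp_all add: cinner_self)
  have "(cmod q)^2 \<le> 1" using q by (simp add: power_le_one)
  hence s2: "s^2 = 1 - (cmod q)^2" using s by auto
  have "cinner y y = cnj q * q + of_real (s^2)"
    unfolding y_def by (simp add: cinner_add_left cinner_add_right cinner_smult_left cinner_smult_right o o' xx power2_eq_square)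
  also have "\<dots> = 1" by (simp add: s2 complex_mult_cnj cmod_power2 mult.commute) 
  finally show "norm y = 1" by (rule norm_from_cinner)
  show "cinner x y = q"
    unfolding y_def by (simp add: cinner_add_right cinner_smult_right o xx)
qed


definition Sset :: "complex \<Rightarrow> complex^'n::finite^'n \<Rightarrow> real set" where
  "Sset q M = {cmod (cinner (M *v x) y) | x y. norm x = 1 \<and> norm y = 1 \<and> cinner x y = q}"

lemma q_numrad_Sset: "q_numrad q M = Sup (Sset q M)"
  unfolding q_numrad_def Sset_def ..

lemma Sset_bdd: "bdd_above (Sset q M)"
  unfolding Sset_def by (rule bdd_aboveI[of _ "op_norm M"]) (auto intro: unit_bound)

lemma Sset_mem: "norm x = 1 \<Longrightarrow> norm y = 1 \<Longrightarrow> cinner x y = q \<Longrightarrow> cmod (cinner (M *v x) y) \<le> q_numrad q M"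
  unfolding q_numrad_Sset by (rule cSup_upper[OF _ Sset_bdd]) (auto simp: Sset_def)

lemma Sset_ne:
  assumes "CARD('n::finite) \<ge> 2" "cmod q \<le> 1"
  shows "Sset q (M::complex^'n^'n) \<noteq> {}"
proof -
  fix i :: 'n
  have x: "norm (axis i (1::complex)) = 1" by (rule norm_from_cinner) (simp add: cinner_axis_right)
  obtain z where z: "norm z = 1" "cinner (axis i 1) z = 0" using exists_orth[OF assms(1)] by blast
  define s where "s = sqrt (1 - (cmod q)^2)"
  let ?y = "cnj q *s axis i 1 + (of_real s :: complex) *s z"
  have "norm ?y = 1" "cinner (axis i 1) ?y = q" using make_y[OF x z assms(2)] s_def by auto
  thus ?thesis unfolding Sset_def using x by blast
qed

lemma lowerb:
  fixes H :: "complex^'n::finite^'n"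
  assumes "CARD('n) \<ge> 2" "cmod q \<le> 1" and u: "norm u = 1"
  shows "cmod q * Re (cinner (H *v u) u) \<le> q_numrad q H"
proof -
  obtain z where z: "norm z = 1" "cinner u z = 0" using exists_orth[OF assms(1)] by blast
  define s where "s = sqrt (1 - (cmod q)^2)"
  define h where "h = cinner (H *v u) u"
  define c where "c = cinner (H *v z) u"
  define d where "d = cinner (H *v u) z"
  let ?y1 = "cnj q *s u + (of_real s :: complex) *s z"
  let ?y2 = "cnj q *s u + (of_real (-s) :: complex) *s z"
  have y1: "norm ?y1 = 1" "cinner u ?y1 = q" using make_y[OF u z assms(2)] s_def by auto
  have y2: "norm ?y2 = 1" "cinner u ?y2 = q" using make_y[OF u z assms(2), of "-s"] s_def by auto
  have e1: "cinner (H *v u) ?y1 = q * h + of_real s * d"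
    by (simp add: cinner_add_right cinner_diff_right cinner_smult_right h_def d_def)
  have e2: "cinner (H *v u) ?y2 = q * h - of_real s * d"
    by (simp add: cinner_add_right cinner_diff_right cinner_smult_right h_def d_def)
  have b1: "cmod (q * h + of_real s * d) \<le> q_numrad q H" using Sset_mem[OF u y1, of H] e1 by simp
  have b2: "cmod (q * h - of_real s * d) \<le> q_numrad q H" using Sset_mem[OF u y2, of H] e2 by simp
  have "2 * cmod (q * h) = cmod ((q * h + of_real s * d) + (q * h - of_real s * d))"
    by (simp add: norm_mult)
  also have "\<dots> \<le> cmod (q * h + of_real s * d) + cmod (q * h - of_real s * d)"
    by (rule norm_triangle_ineq)
  finally have "cmod (q * h) \<le> q_numrad q H" using b1 b2 by simp
  moreover have "cmod q * Re h \<le> cmod (q * h)"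
    by (simp add: norm_mult mult_left_mono complex_Re_le_cmod)
  ultimately show ?thesis unfolding h_def by simp
qed

theorem mainTheorem5:
  fixes A :: "complex ^ 'n::finite ^ 'n" and \<alpha> :: real and q :: complex
  assumes "CARD('n) \<ge> 2"
    and "0 \<le> \<alpha>" and "\<alpha> < pi / 2"
    and "sectorial \<alpha> A"
    and "0 < cmod q" and "cmod q \<le> 1"
  shows "cos \<alpha> * q_numrad q A \<le> op_norm (herm_part A)
       \<and> cmod q * cos \<alpha> * q_numrad q A \<le> q_numrad q (herm_part A)"
proof -
  have c0: "cos \<alpha> > 0" using assms(2,3) by (intro cos_gt_zero_pi) auto
  have gen: "cos \<alpha> * q_numrad q A \<le> W"
    if W: "\<And>u. norm u = 1 \<Longrightarrow> Re (cinner (herm_part A *v u) u) \<le> W" for W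
  proof -
    have "Sup (Sset q A) \<le> W / cos \<alpha>"
    proof (rule cSup_least)
      show "Sset q A \<noteq> {}" by (rule Sset_ne[OF assms(1,6)])
      fix v assume "v \<in> Sset q A"
      then obtain x y where v: "v = cmod (cinner (A *v x) y)" "norm x = 1" "norm y = 1"
        unfolding Sset_def by blast
      have "cos \<alpha> * v \<le> W" unfolding v(1)
        by (rule key_bound[OF assms(4,2,3) W v(2,3)])
      thus "v \<le> W / cos \<alpha>" using c0 by (simp add: field_simps)
    qed
    thus ?thesis using c0 unfolding q_numrad_Sset by (simp add: field_simps)
  qed
  have a: "cos \<alpha> * q_numrad q A \<le> op_norm (herm_part A)"
  proof (rule gen)
    fix u :: "complex^'n" assume u: "norm u = 1"
    show "Re (cinner (herm_part A *v u) u) \<le> op_norm (herm_part A)"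
      using unit_bound[OF u u, of "herm_part A"] complex_Re_le_cmod order_trans by blast
  qed
  have "cos \<alpha> * q_numrad q A \<le> q_numrad q (herm_part A) / cmod q"
  proof (rule gen)
    fix u :: "complex^'n" assume u: "norm u = 1"
    show "Re (cinner (herm_part A *v u) u) \<le> q_numrad q (herm_part A) / cmod q"
      using lowerb[OF assms(1,6) u, of "herm_part A"] assms(5) by (simp add: field_simps)
  qed
  hence b: "cmod q * cos \<alpha> * q_numrad q A \<le> q_numrad q (herm_part A)"
    using assms(5) by (simp add: field_simps)
  from a b show ?thesis by blast
qed

end
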